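(* Let $T=(T,\eta,\mu)$ be a monad on a category $\mathcal{A}$ and $X$ an object of $\mathcal{A}$. (i) If $a\colon T(X)\to X$ is a $T$-algebra and $b\colon X\to T(X)$ is a $\overline{T}$-coalgebra (basis) on $a$, then $b$ is an equaliser in $\mathcal{A}$ of the pair $T(b),T(\eta_X)\colon T(X)\rightrightarrows T^2(X)$. (ii) Conversely, if $c\colon X\to T(X)$ is a map that is an equaliser of $T(c),T(\eta_X)\colon T(X)\rightrightarrows T^2(X)$, then there is a unique map $a\colon T(X)\to X$ with $c\circ a=\mu_X\circ T(c)$, this $a$ is a $T$-algebra, and $c$ is a $\overline{T}$-coalgebra on $a$. Thus pairs (algebra $a$, basis $b$ on $a$) on $X$ correspond bijectively to maps $c\colon X\to T(X)$ that equalise $T(c)$ and $T(\eta_X)$ universally, via $(a,b)\mapsto b$.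
   Context: For a monad $T=(T,\eta,\mu)$ on $\mathcal{A}$, an Eilenberg–Moore algebra is $a\colon T(X)\to X$ with $a\circ\eta_X=\mathrm{id}$ and $a\circ\mu_X=a\circ T(a)$. The induced comonad $\overline{T}$ on the category of algebras sends $a$ to the free algebra $\mu_X\colon T^2X\to TX$, with counit $a$ and comultiplication $T(\eta_X)$. A $\overline{T}$-coalgebra (basis) on the algebra $a\colon TX\to X$ is a map $b\colon X\to TX$ in $\mathcal{A}$ satisfying $b\circ a=\mu_X\circ T(b)$, $a\circ b=\mathrm{id}_X$ and $T(\eta_X)\circ b=T(b)\circ b$. *)

theory Defs
  imports Main
begin

text \<open>A (locally small) category, given by its objects, hom-sets, composition
  (written in the order g \<cdot> f = "g after f") and identities.
  Hom-sets of distinct pairs of objects are disjoint.\<close>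

record ('o, 'm) category =
  Obj :: "'o set"
  Hom :: "'o \<Rightarrow> 'o \<Rightarrow> 'm set"
  cmp :: "'m \<Rightarrow> 'm \<Rightarrow> 'm"
  idm :: "'o \<Rightarrow> 'm"

definition is_category :: "('o, 'm) category \<Rightarrow> bool" where
  "is_category C \<longleftrightarrow>
     (\<forall>A B A' B'. A \<in> Obj C \<and> B \<in> Obj C \<and> A' \<in> Obj C \<and> B' \<in> Obj C \<and>
        Hom C A B \<inter> Hom C A' B' \<noteq> {} \<longrightarrow> A = A' \<and> B = B') \<and>
     (\<forall>A B. (A \<notin> Obj C \<or> B \<notin> Obj C) \<longrightarrow> Hom C A B = {}) \<and>
     (\<forall>A B D f g. A \<in> Obj C \<and> B \<in> Obj C \<and> D \<in> Obj C \<and> f \<in> Hom C A B \<and> g \<in> Hom C B D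
        \<longrightarrow> cmp C g f \<in> Hom C A D) \<and>
     (\<forall>A B D E f g h. A \<in> Obj C \<and> B \<in> Obj C \<and> D \<in> Obj C \<and> E \<in> Obj C \<and>
        f \<in> Hom C A B \<and> g \<in> Hom C B D \<and> h \<in> Hom C D E
        \<longrightarrow> cmp C h (cmp C g f) = cmp C (cmp C h g) f) \<and>
     (\<forall>A. A \<in> Obj C \<longrightarrow> idm C A \<in> Hom C A A) \<and>
     (\<forall>A B f. A \<in> Obj C \<and> B \<in> Obj C \<and> f \<in> Hom C A B
        \<longrightarrow> cmp C (idm C B) f = f \<and> cmp C f (idm C A) = f)"

text \<open>A monad (T, \<eta>, \<mu>) on C: an endofunctor given by its object part TO and
  morphism part TM, with unit \<eta> and multiplication \<mu> given by their components.\<close>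

definition is_monad ::
  "('o, 'm) category \<Rightarrow> ('o \<Rightarrow> 'o) \<Rightarrow> ('m \<Rightarrow> 'm) \<Rightarrow> ('o \<Rightarrow> 'm) \<Rightarrow> ('o \<Rightarrow> 'm) \<Rightarrow> bool" where
  "is_monad C TO TM eta mu \<longleftrightarrow>
     \<comment> \<open>functor\<close>
     (\<forall>A. A \<in> Obj C \<longrightarrow> TO A \<in> Obj C) \<and>
     (\<forall>A B f. A \<in> Obj C \<and> B \<in> Obj C \<and> f \<in> Hom C A B \<longrightarrow> TM f \<in> Hom C (TO A) (TO B)) \<and>
     (\<forall>A. A \<in> Obj C \<longrightarrow> TM (idm C A) = idm C (TO A)) \<and>
     (\<forall>A B D f g. A \<in> Obj C \<and> B \<in> Obj C \<and> D \<in> Obj C \<and> f \<in> Hom C A B \<and> g \<in> Hom C B D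
        \<longrightarrow> TM (cmp C g f) = cmp C (TM g) (TM f)) \<and>
     \<comment> \<open>unit and multiplication are natural transformations\<close>
     (\<forall>A. A \<in> Obj C \<longrightarrow> eta A \<in> Hom C A (TO A)) \<and>
     (\<forall>A. A \<in> Obj C \<longrightarrow> mu A \<in> Hom C (TO (TO A)) (TO A)) \<and>
     (\<forall>A B f. A \<in> Obj C \<and> B \<in> Obj C \<and> f \<in> Hom C A B
        \<longrightarrow> cmp C (eta B) f = cmp C (TM f) (eta A)) \<and>
     (\<forall>A B f. A \<in> Obj C \<and> B \<in> Obj C \<and> f \<in> Hom C A B
        \<longrightarrow> cmp C (mu B) (TM (TM f)) = cmp C (TM f) (mu A)) \<and>
     \<comment> \<open>monad laws\<close>
     (\<forall>A. A \<in> Obj C \<longrightarrow> cmp C (mu A) (eta (TO A)) = idm C (TO A)) \<and>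
     (\<forall>A. A \<in> Obj C \<longrightarrow> cmp C (mu A) (TM (eta A)) = idm C (TO A)) \<and>
     (\<forall>A. A \<in> Obj C \<longrightarrow> cmp C (mu A) (TM (mu A)) = cmp C (mu A) (mu (TO A)))"

definition is_EM_algebra ::
  "('o, 'm) category \<Rightarrow> ('o \<Rightarrow> 'o) \<Rightarrow> ('m \<Rightarrow> 'm) \<Rightarrow> ('o \<Rightarrow> 'm) \<Rightarrow> ('o \<Rightarrow> 'm) \<Rightarrow> 'o \<Rightarrow> 'm \<Rightarrow> bool" where
  "is_EM_algebra C TO TM eta mu X a \<longleftrightarrow>
     a \<in> Hom C (TO X) X \<and>
     cmp C a (eta X) = idm C X \<and>
     cmp C a (mu X) = cmp C a (TM a)"

text \<open>A coalgebra (basis) b : X \<rightarrow> T X for the induced comonad on the algebra a.\<close>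

definition is_basis ::
  "('o, 'm) category \<Rightarrow> ('o \<Rightarrow> 'o) \<Rightarrow> ('m \<Rightarrow> 'm) \<Rightarrow> ('o \<Rightarrow> 'm) \<Rightarrow> ('o \<Rightarrow> 'm) \<Rightarrow> 'o \<Rightarrow> 'm \<Rightarrow> 'm \<Rightarrow> bool" where
  "is_basis C TO TM eta mu X a b \<longleftrightarrow>
     b \<in> Hom C X (TO X) \<and>
     cmp C b a = cmp C (mu X) (TM b) \<and>
     cmp C a b = idm C X \<and>
     cmp C (TM (eta X)) b = cmp C (TM b) b"

definition is_equaliser ::
  "('o, 'm) category \<Rightarrow> 'o \<Rightarrow> 'o \<Rightarrow> 'o \<Rightarrow> 'm \<Rightarrow> 'm \<Rightarrow> 'm \<Rightarrow> bool" where
  "is_equaliser C E X Y e f g \<longleftrightarrow>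
     e \<in> Hom C E X \<and> f \<in> Hom C X Y \<and> g \<in> Hom C X Y \<and>
     cmp C f e = cmp C g e \<and>
     (\<forall>Z h. Z \<in> Obj C \<and> h \<in> Hom C Z X \<and> cmp C f h = cmp C g h \<longrightarrow>
        (\<exists>!u. u \<in> Hom C Z E \<and> cmp C e u = h))"

end

theory Submission
  imports Defs
begin

locale M =
  fixes C :: "('o, 'm) category" and TO :: "'o \<Rightarrow> 'o" and TM :: "'m \<Rightarrow> 'm"
    and eta mu :: "'o \<Rightarrow> 'm"
  assumes cat: "is_category C" and mon: "is_monad C TO TM eta mu"
begin

abbreviation ccmp (infixl "\<cdot>" 55) where "g \<cdot> f \<equiv> cmp C g f"

lemma hom_obj: "f \<in> Hom C A B \<Longrightarrow> A \<in> Obj C \<and> B \<in> Obj C"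
proof -
  assume f: "f \<in> Hom C A B"
  have ax: "\<forall>A B. (A \<notin> Obj C \<or> B \<notin> Obj C) \<longrightarrow> Hom C A B = {}"
    using cat unfolding is_category_def by (elim conjE) assumption
  show ?thesis using ax[rule_format, of A B] f by blast
qed

lemma comp: "f \<in> Hom C A B \<Longrightarrow> g \<in> Hom C B D \<Longrightarrow> g \<cdot> f \<in> Hom C A D"
proof -
  assume f: "f \<in> Hom C A B" and g: "g \<in> Hom C B D"
  have ax: "\<forall>A B D f g. A \<in> Obj C \<and> B \<in> Obj C \<and> D \<in> Obj C \<and> f \<in> Hom C A B \<and> g \<in> Hom C B D
        \<longrightarrow> cmp C g f \<in> Hom C A D" using cat unfolding is_category_def by (elim conjE) assumption
  show ?thesis using ax[rule_format, OF conjI[OF conjunct1[OF hom_obj[OF f]] conjI[OF conjunct2[OF hom_obj[OF f]] conjI[OF conjunct2[OF hom_obj[OF g]] conjI[OF f g]]]]] .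
qed

lemma assoc: "f \<in> Hom C A B \<Longrightarrow> g \<in> Hom C B D \<Longrightarrow> h \<in> Hom C D E \<Longrightarrow> h \<cdot> (g \<cdot> f) = (h \<cdot> g) \<cdot> f"
proof -
  assume f: "f \<in> Hom C A B" and g: "g \<in> Hom C B D" and h: "h \<in> Hom C D E"
  have ax: "\<forall>A B D E f g h. A \<in> Obj C \<and> B \<in> Obj C \<and> D \<in> Obj C \<and> E \<in> Obj C \<and>
        f \<in> Hom C A B \<and> g \<in> Hom C B D \<and> h \<in> Hom C D E
        \<longrightarrow> cmp C h (cmp C g f) = cmp C (cmp C h g) f" using cat unfolding is_category_def by (elim conjE) assumption
  show ?thesis apply (rule ax[rule_format, of A B D E f g h]) using hom_obj[OF f] hom_obj[OF h] f g h by simp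
qed

lemma idlr: "f \<in> Hom C A B \<Longrightarrow> idm C B \<cdot> f = f \<and> f \<cdot> idm C A = f"
proof -
  assume f: "f \<in> Hom C A B"
  have ax: "\<forall>A B f. A \<in> Obj C \<and> B \<in> Obj C \<and> f \<in> Hom C A B
        \<longrightarrow> cmp C (idm C B) f = f \<and> cmp C f (idm C A) = f" using cat unfolding is_category_def by (elim conjE) assumption
  show ?thesis apply (rule ax[rule_format, of A B f]) using hom_obj[OF f] f by simp
qed

lemma idl: "f \<in> Hom C A B \<Longrightarrow> idm C B \<cdot> f = f" using idlr by blast
lemma idr: "f \<in> Hom C A B \<Longrightarrow> f \<cdot> idm C A = f" using idlr by blast

lemma idh: "A \<in> Obj C \<Longrightarrow> idm C A \<in> Hom C A A"
proof -
  have ax: "\<forall>A. A \<in> Obj C \<longrightarrow> idm C A \<in> Hom C A A"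
    using cat unfolding is_category_def by (elim conjE) assumption
  thus "A \<in> Obj C \<Longrightarrow> idm C A \<in> Hom C A A" by blast
qed

lemma TO_obj: "A \<in> Obj C \<Longrightarrow> TO A \<in> Obj C"
proof -
  have ax: "\<forall>A. A \<in> Obj C \<longrightarrow> TO A \<in> Obj C"
    using mon unfolding is_monad_def by (elim conjE) assumption
  thus "A \<in> Obj C \<Longrightarrow> TO A \<in> Obj C" by blast
qed

lemma TM_hom: "f \<in> Hom C A B \<Longrightarrow> TM f \<in> Hom C (TO A) (TO B)"
proof -
  assume f: "f \<in> Hom C A B"
  have ax: "\<forall>A B f. A \<in> Obj C \<and> B \<in> Obj C \<and> f \<in> Hom C A B \<longrightarrow> TM f \<in> Hom C (TO A) (TO B)"
    using mon unfolding is_monad_def by (elim conjE) assumption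
  show ?thesis using ax[rule_format, of A B f] hom_obj[OF f] f by blast
qed

lemma TM_comp: "f \<in> Hom C A B \<Longrightarrow> g \<in> Hom C B D \<Longrightarrow> TM (g \<cdot> f) = TM g \<cdot> TM f"
proof -
  assume f: "f \<in> Hom C A B" and g: "g \<in> Hom C B D"
  have ax: "\<forall>A B D f g. A \<in> Obj C \<and> B \<in> Obj C \<and> D \<in> Obj C \<and> f \<in> Hom C A B \<and> g \<in> Hom C B D
        \<longrightarrow> TM (cmp C g f) = cmp C (TM g) (TM f)" using mon unfolding is_monad_def by (elim conjE) assumption
  show ?thesis apply (rule ax[rule_format, of A B D f g]) using hom_obj[OF f] hom_obj[OF g] f g by simp
qed

lemma eta_hom: "A \<in> Obj C \<Longrightarrow> eta A \<in> Hom C A (TO A)"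
proof -
  have ax: "\<forall>A. A \<in> Obj C \<longrightarrow> eta A \<in> Hom C A (TO A)"
    using mon unfolding is_monad_def by (elim conjE) assumption
  thus "A \<in> Obj C \<Longrightarrow> eta A \<in> Hom C A (TO A)" by blast
qed

lemma mu_hom: "A \<in> Obj C \<Longrightarrow> mu A \<in> Hom C (TO (TO A)) (TO A)"
proof -
  have ax: "\<forall>A. A \<in> Obj C \<longrightarrow> mu A \<in> Hom C (TO (TO A)) (TO A)"
    using mon unfolding is_monad_def by (elim conjE) assumption
  thus "A \<in> Obj C \<Longrightarrow> mu A \<in> Hom C (TO (TO A)) (TO A)" by blast
qed

lemma eta_nat: "f \<in> Hom C A B \<Longrightarrow> eta B \<cdot> f = TM f \<cdot> eta A"
proof -
  assume f: "f \<in> Hom C A B"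
  have ax: "\<forall>A B f. A \<in> Obj C \<and> B \<in> Obj C \<and> f \<in> Hom C A B
        \<longrightarrow> cmp C (eta B) f = cmp C (TM f) (eta A)" using mon unfolding is_monad_def by (elim conjE) assumption
  show ?thesis apply (rule ax[rule_format, of A B f]) using hom_obj[OF f] f by simp
qed

lemma mu_nat: "f \<in> Hom C A B \<Longrightarrow> mu B \<cdot> TM (TM f) = TM f \<cdot> mu A"
proof -
  assume f: "f \<in> Hom C A B"
  have ax: "\<forall>A B f. A \<in> Obj C \<and> B \<in> Obj C \<and> f \<in> Hom C A B
        \<longrightarrow> cmp C (mu B) (TM (TM f)) = cmp C (TM f) (mu A)" using mon unfolding is_monad_def by (elim conjE) assumption
  show ?thesis apply (rule ax[rule_format, of A B f]) using hom_obj[OF f] f by simp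
qed

lemma law1: "A \<in> Obj C \<Longrightarrow> mu A \<cdot> eta (TO A) = idm C (TO A)"
proof -
  have ax: "\<forall>A. A \<in> Obj C \<longrightarrow> cmp C (mu A) (eta (TO A)) = idm C (TO A)"
    using mon unfolding is_monad_def by (elim conjE) assumption
  thus "A \<in> Obj C \<Longrightarrow> mu A \<cdot> eta (TO A) = idm C (TO A)" by blast
qed

lemma law2: "A \<in> Obj C \<Longrightarrow> mu A \<cdot> TM (eta A) = idm C (TO A)"
proof -
  have ax: "\<forall>A. A \<in> Obj C \<longrightarrow> cmp C (mu A) (TM (eta A)) = idm C (TO A)"
    using mon unfolding is_monad_def by (elim conjE) assumption
  thus "A \<in> Obj C \<Longrightarrow> mu A \<cdot> TM (eta A) = idm C (TO A)" by blast
qed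

lemma law3: "A \<in> Obj C \<Longrightarrow> mu A \<cdot> TM (mu A) = mu A \<cdot> mu (TO A)"
proof -
  have ax: "\<forall>A. A \<in> Obj C \<longrightarrow> cmp C (mu A) (TM (mu A)) = cmp C (mu A) (mu (TO A))"
    using mon unfolding is_monad_def by (elim conjE) assumption
  thus "A \<in> Obj C \<Longrightarrow> mu A \<cdot> TM (mu A) = mu A \<cdot> mu (TO A)" by blast
qed


lemma eqD1: "is_equaliser C E X Y e f g \<Longrightarrow> e \<in> Hom C E X"
  unfolding is_equaliser_def by (elim conjE) assumption
lemma eqD2: "is_equaliser C E X Y e f g \<Longrightarrow> f \<in> Hom C X Y"
  unfolding is_equaliser_def by (elim conjE) assumption
lemma eqD3: "is_equaliser C E X Y e f g \<Longrightarrow> g \<in> Hom C X Y"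
  unfolding is_equaliser_def by (elim conjE) assumption
lemma eqD4: "is_equaliser C E X Y e f g \<Longrightarrow> f \<cdot> e = g \<cdot> e"
  unfolding is_equaliser_def by (elim conjE) assumption
lemma eqD5: "is_equaliser C E X Y e f g \<Longrightarrow> Z \<in> Obj C \<Longrightarrow> h \<in> Hom C Z X \<Longrightarrow> f \<cdot> h = g \<cdot> h \<Longrightarrow>
    \<exists>!u. u \<in> Hom C Z E \<and> e \<cdot> u = h"
proof -
  assume a: "is_equaliser C E X Y e f g" "Z \<in> Obj C" "h \<in> Hom C Z X" "f \<cdot> h = g \<cdot> h"
  have ax: "\<forall>Z h. Z \<in> Obj C \<and> h \<in> Hom C Z X \<and> f \<cdot> h = g \<cdot> h \<longrightarrow> (\<exists>!u. u \<in> Hom C Z E \<and> e \<cdot> u = h)"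
    using a(1) unfolding is_equaliser_def by (elim conjE) assumption
  show ?thesis by (rule ax[rule_format, of Z h]) (intro conjI a(2-4))
qed
lemma algD1: "is_EM_algebra C TO TM eta mu X a \<Longrightarrow> a \<in> Hom C (TO X) X"
  unfolding is_EM_algebra_def by (elim conjE) assumption
lemma basD1: "is_basis C TO TM eta mu X a b \<Longrightarrow> b \<in> Hom C X (TO X)"
  unfolding is_basis_def by (elim conjE) assumption
lemma basD2: "is_basis C TO TM eta mu X a b \<Longrightarrow> b \<cdot> a = mu X \<cdot> TM b"
  unfolding is_basis_def by (elim conjE) assumption
lemma basD3: "is_basis C TO TM eta mu X a b \<Longrightarrow> a \<cdot> b = idm C X"
  unfolding is_basis_def by (elim conjE) assumption
lemma basD4: "is_basis C TO TM eta mu X a b \<Longrightarrow> TM (eta X) \<cdot> b = TM b \<cdot> b"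
  unfolding is_basis_def by (elim conjE) assumption

lemma eq_mono:
  assumes eq: "is_equaliser C E X Y e f g" and u: "u1 \<in> Hom C Z E" "u2 \<in> Hom C Z E" and ee: "e \<cdot> u1 = e \<cdot> u2"
  shows "u1 = u2"
proof -
  have e: "e \<in> Hom C E X" "f \<in> Hom C X Y" "g \<in> Hom C X Y" "f \<cdot> e = g \<cdot> e"
    using eqD1[OF eq] eqD2[OF eq] eqD3[OF eq] eqD4[OF eq] by auto
  have h: "e \<cdot> u1 \<in> Hom C Z X" using comp[OF u(1) e(1)] .
  have "f \<cdot> (e \<cdot> u1) = (f \<cdot> e) \<cdot> u1" by (rule assoc[OF u(1) e(1) e(2)])
  also have "\<dots> = (g \<cdot> e) \<cdot> u1" using e(4) by simp
  also have "\<dots> = g \<cdot> (e \<cdot> u1)" by (rule assoc[OF u(1) e(1) e(3), symmetric])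
  finally have fg: "f \<cdot> (e \<cdot> u1) = g \<cdot> (e \<cdot> u1)" .
  have Z: "Z \<in> Obj C" using hom_obj[OF u(1)] by (rule conjunct1)
  have ex: "\<exists>!u. u \<in> Hom C Z E \<and> e \<cdot> u = e \<cdot> u1" by (rule eqD5[OF eq Z h fg])
  from ex obtain w where "\<forall>y. y \<in> Hom C Z E \<and> e \<cdot> y = e \<cdot> u1 \<longrightarrow> y = w" by (elim ex1E) blast
  thus ?thesis using u ee by metis
qed

lemma part1:
  assumes X: "X \<in> Obj C" and alg: "is_EM_algebra C TO TM eta mu X a"
    and bas: "is_basis C TO TM eta mu X a b"
  shows "is_equaliser C X (TO X) (TO (TO X)) b (TM b) (TM (eta X))"
proof -
  have a: "a \<in> Hom C (TO X) X" using algD1[OF alg] .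
  have b: "b \<in> Hom C X (TO X)" and ba: "b \<cdot> a = mu X \<cdot> TM b" and ab: "a \<cdot> b = idm C X"
    and bb: "TM (eta X) \<cdot> b = TM b \<cdot> b"
    using basD1[OF bas] basD2[OF bas] basD3[OF bas] basD4[OF bas] by auto
  have Tb: "TM b \<in> Hom C (TO X) (TO (TO X))" using TM_hom b by blast
  have Te: "TM (eta X) \<in> Hom C (TO X) (TO (TO X))" using TM_hom eta_hom X by blast
  have mu: "mu X \<in> Hom C (TO (TO X)) (TO X)" using mu_hom X by blast
  show ?thesis unfolding is_equaliser_def
  proof (intro conjI b Tb Te allI impI; (elim conjE)?)
    show "TM b \<cdot> b = TM (eta X) \<cdot> b" using bb by simp
    fix Z h assume h: "h \<in> Hom C Z (TO X)" and hh: "TM b \<cdot> h = TM (eta X) \<cdot> h"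
    show "\<exists>!u. u \<in> Hom C Z X \<and> b \<cdot> u = h"
    proof (rule ex1I[where a="a \<cdot> h"])
      show "a \<cdot> h \<in> Hom C Z X \<and> b \<cdot> (a \<cdot> h) = h"
      proof
        show "a \<cdot> h \<in> Hom C Z X" using comp h a by blast
        have "b \<cdot> (a \<cdot> h) = (b \<cdot> a) \<cdot> h" by (rule assoc[OF h a b])
        also have "\<dots> = (mu X \<cdot> TM b) \<cdot> h" using ba by simp
        also have "\<dots> = mu X \<cdot> (TM b \<cdot> h)" by (rule assoc[OF h Tb mu, symmetric])
        also have "\<dots> = mu X \<cdot> (TM (eta X) \<cdot> h)" using hh by simp
        also have "\<dots> = (mu X \<cdot> TM (eta X)) \<cdot> h" by (rule assoc[OF h Te mu])
        also have "\<dots> = h" using law2[OF X] idl h by simp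
        finally show "b \<cdot> (a \<cdot> h) = h" .
      qed
    next
      fix u assume u: "u \<in> Hom C Z X \<and> b \<cdot> u = h"
      have "u = idm C X \<cdot> u" using idl[OF u[THEN conjunct1]] by simp
      also have "\<dots> = (a \<cdot> b) \<cdot> u" using ab by simp
      also have "\<dots> = a \<cdot> (b \<cdot> u)" by (rule assoc[OF u[THEN conjunct1] b a, symmetric])
      finally show "u = a \<cdot> h" using u by simp
    qed
  qed
qed

lemma part2:
  assumes X: "X \<in> Obj C" and eq: "is_equaliser C X (TO X) (TO (TO X)) c (TM c) (TM (eta X))"
  shows "(\<exists>!a. a \<in> Hom C (TO X) X \<and> c \<cdot> a = mu X \<cdot> TM c) \<and>
        (\<forall>a. a \<in> Hom C (TO X) X \<and> c \<cdot> a = mu X \<cdot> TM c \<longrightarrow>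
           is_EM_algebra C TO TM eta mu X a \<and> is_basis C TO TM eta mu X a c)"
proof -
  have c: "c \<in> Hom C X (TO X)" and Tc: "TM c \<in> Hom C (TO X) (TO (TO X))"
    and cc: "TM c \<cdot> c = TM (eta X) \<cdot> c"
    using eqD1[OF eq] eqD2[OF eq] eqD4[OF eq] by auto
  have TX: "TO X \<in> Obj C" using TO_obj X by blast
  have TTX: "TO (TO X) \<in> Obj C" using TO_obj TX by blast
  have e: "eta X \<in> Hom C X (TO X)" using eta_hom X by blast
  have Te: "TM (eta X) \<in> Hom C (TO X) (TO (TO X))" using TM_hom e by blast
  have TTe: "TM (TM (eta X)) \<in> Hom C (TO (TO X)) (TO (TO (TO X)))" using TM_hom Te by blast
  have TTc: "TM (TM c) \<in> Hom C (TO (TO X)) (TO (TO (TO X)))" using TM_hom Tc by blast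
  have mu: "mu X \<in> Hom C (TO (TO X)) (TO X)" using mu_hom X by blast
  have muT: "mu (TO X) \<in> Hom C (TO (TO (TO X))) (TO (TO X))" using mu_hom TX by blast
  have Tmu: "TM (mu X) \<in> Hom C (TO (TO (TO X))) (TO (TO X))" using TM_hom mu by blast
  have muTc: "mu X \<cdot> TM c \<in> Hom C (TO X) (TO X)" using comp Tc mu by blast
  have key: "TM c \<cdot> (mu X \<cdot> TM c) = TM (eta X) \<cdot> (mu X \<cdot> TM c)"
  proof -
    have "TM c \<cdot> (mu X \<cdot> TM c) = (TM c \<cdot> mu X) \<cdot> TM c" by (rule assoc[OF Tc mu Tc])
    also have "\<dots> = (mu (TO X) \<cdot> TM (TM c)) \<cdot> TM c" using mu_nat[OF c] by simp
    also have "\<dots> = mu (TO X) \<cdot> (TM (TM c) \<cdot> TM c)" by (rule assoc[OF Tc TTc muT, symmetric])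
    also have "\<dots> = mu (TO X) \<cdot> TM (TM c \<cdot> c)" using TM_comp[OF c Tc] by simp
    also have "\<dots> = mu (TO X) \<cdot> TM (TM (eta X) \<cdot> c)" using cc by simp
    also have "\<dots> = mu (TO X) \<cdot> (TM (TM (eta X)) \<cdot> TM c)" using TM_comp[OF c Te] by simp
    also have "\<dots> = (mu (TO X) \<cdot> TM (TM (eta X))) \<cdot> TM c" by (rule assoc[OF Tc TTe muT])
    also have "\<dots> = (TM (eta X) \<cdot> mu X) \<cdot> TM c" using mu_nat[OF e] by simp
    also have "\<dots> = TM (eta X) \<cdot> (mu X \<cdot> TM c)" by (rule assoc[OF Tc mu Te, symmetric])
    finally show ?thesis .
  qed
  have ex: "\<exists>!a. a \<in> Hom C (TO X) X \<and> c \<cdot> a = mu X \<cdot> TM c"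
    by (rule eqD5[OF eq TX muTc key])
  have all: "is_EM_algebra C TO TM eta mu X a \<and> is_basis C TO TM eta mu X a c"
    if a: "a \<in> Hom C (TO X) X" and ca: "c \<cdot> a = mu X \<cdot> TM c" for a
  proof -
    have Ta: "TM a \<in> Hom C (TO (TO X)) (TO X)" using TM_hom a by blast
    have ae: "a \<cdot> eta X \<in> Hom C X X" using comp a e by blast
    have idX: "idm C X \<in> Hom C X X" using idh X by blast
    have "c \<cdot> (a \<cdot> eta X) = (c \<cdot> a) \<cdot> eta X" by (rule assoc[OF e a c])
    also have "\<dots> = (mu X \<cdot> TM c) \<cdot> eta X" using ca by simp
    also have "\<dots> = mu X \<cdot> (TM c \<cdot> eta X)" by (rule assoc[OF e Tc mu, symmetric])
    also have "\<dots> = mu X \<cdot> (eta (TO X) \<cdot> c)" using eta_nat[OF c] by simp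
    also have "\<dots> = (mu X \<cdot> eta (TO X)) \<cdot> c" by (rule assoc[OF c eta_hom[OF TX] mu])
    also have "\<dots> = c" using law1[OF X] idl c by simp
    also have "\<dots> = c \<cdot> idm C X" using idr[OF c] by simp
    finally have l1: "a \<cdot> eta X = idm C X" using eq_mono[OF eq ae idX] by blast
    have amu: "a \<cdot> mu X \<in> Hom C (TO (TO X)) X" using comp a mu by blast
    have aTa: "a \<cdot> TM a \<in> Hom C (TO (TO X)) X" using comp a Ta by blast
    have "c \<cdot> (a \<cdot> mu X) = (c \<cdot> a) \<cdot> mu X" by (rule assoc[OF mu a c])
    also have "\<dots> = (mu X \<cdot> TM c) \<cdot> mu X" using ca by simp
    also have "\<dots> = mu X \<cdot> (TM c \<cdot> mu X)" by (rule assoc[OF mu Tc mu, symmetric])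
    also have "\<dots> = mu X \<cdot> (mu (TO X) \<cdot> TM (TM c))" using mu_nat[OF c] by simp
    also have "\<dots> = (mu X \<cdot> mu (TO X)) \<cdot> TM (TM c)" by (rule assoc[OF TTc muT mu])
    also have "\<dots> = (mu X \<cdot> TM (mu X)) \<cdot> TM (TM c)" using law3[OF X] by simp
    also have "\<dots> = mu X \<cdot> (TM (mu X) \<cdot> TM (TM c))" by (rule assoc[OF TTc Tmu mu, symmetric])
    also have "\<dots> = mu X \<cdot> TM (mu X \<cdot> TM c)" using TM_comp[OF Tc mu] by simp
    also have "\<dots> = mu X \<cdot> TM (c \<cdot> a)" using ca by simp
    also have "\<dots> = mu X \<cdot> (TM c \<cdot> TM a)" using TM_comp[OF a c] by simp
    also have "\<dots> = (mu X \<cdot> TM c) \<cdot> TM a" by (rule assoc[OF Ta Tc mu])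
    also have "\<dots> = (c \<cdot> a) \<cdot> TM a" using ca by simp
    also have "\<dots> = c \<cdot> (a \<cdot> TM a)" by (rule assoc[OF Ta a c, symmetric])
    finally have l2: "a \<cdot> mu X = a \<cdot> TM a" using eq_mono[OF eq amu aTa] by blast
    have ac: "a \<cdot> c \<in> Hom C X X" using comp a c by blast
    have "c \<cdot> (a \<cdot> c) = (c \<cdot> a) \<cdot> c" by (rule assoc[OF c a c])
    also have "\<dots> = (mu X \<cdot> TM c) \<cdot> c" using ca by simp
    also have "\<dots> = mu X \<cdot> (TM c \<cdot> c)" by (rule assoc[OF c Tc mu, symmetric])
    also have "\<dots> = mu X \<cdot> (TM (eta X) \<cdot> c)" using cc by simp
    also have "\<dots> = (mu X \<cdot> TM (eta X)) \<cdot> c" by (rule assoc[OF c Te mu])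
    also have "\<dots> = c" using law2[OF X] idl c by simp
    also have "\<dots> = c \<cdot> idm C X" using idr[OF c] by simp
    finally have l3: "a \<cdot> c = idm C X" using eq_mono[OF eq ac idX] by blast
    show ?thesis unfolding is_EM_algebra_def is_basis_def
      by (intro conjI a l1 l2 c ca l3 cc[symmetric])
  qed
  show ?thesis
  proof (rule conjI[OF ex], intro allI impI)
    fix a assume H: "a \<in> Hom C (TO X) X \<and> c \<cdot> a = mu X \<cdot> TM c"
    show "is_EM_algebra C TO TM eta mu X a \<and> is_basis C TO TM eta mu X a c"
      by (rule all[OF conjunct1[OF H] conjunct2[OF H]])
  qed
qed

lemma basis_unique:
  assumes "is_EM_algebra C TO TM eta mu X a" "is_basis C TO TM eta mu X a b"
    "is_EM_algebra C TO TM eta mu X a'" "is_basis C TO TM eta mu X a' b"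
  shows "a = a'"
proof -
  have a: "a \<in> Hom C (TO X) X" and a': "a' \<in> Hom C (TO X) X"
    using assms unfolding is_EM_algebra_def by auto
  have b: "b \<in> Hom C X (TO X)" and ab: "a \<cdot> b = idm C X"
    and e: "b \<cdot> a = b \<cdot> a'"
    using assms(2,4) unfolding is_basis_def by auto
  have "a = idm C X \<cdot> a" using idl[OF a] by simp
  also have "\<dots> = (a \<cdot> b) \<cdot> a" using ab by simp
  also have "\<dots> = a \<cdot> (b \<cdot> a)" by (rule assoc[OF a b a, symmetric])
  also have "\<dots> = a \<cdot> (b \<cdot> a')" using e by simp
  also have "\<dots> = (a \<cdot> b) \<cdot> a'" by (rule assoc[OF a' b a])
  also have "\<dots> = a'" using ab idl a' by simp
  finally show ?thesis .
qed

end

theorem lemma2p3: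
  fixes C :: "('o, 'm) category"
    and TO :: "'o \<Rightarrow> 'o" and TM :: "'m \<Rightarrow> 'm"
    and eta mu :: "'o \<Rightarrow> 'm" and X :: 'o
  assumes "is_category C"
    and "is_monad C TO TM eta mu"
    and "X \<in> Obj C"
  shows
    "(\<forall>a b. is_EM_algebra C TO TM eta mu X a \<and> is_basis C TO TM eta mu X a b \<longrightarrow>
        is_equaliser C X (TO X) (TO (TO X)) b (TM b) (TM (eta X)))
   \<and> (\<forall>c. is_equaliser C X (TO X) (TO (TO X)) c (TM c) (TM (eta X)) \<longrightarrow>
        (\<exists>!a. a \<in> Hom C (TO X) X \<and> cmp C c a = cmp C (mu X) (TM c)) \<and>
        (\<forall>a. a \<in> Hom C (TO X) X \<and> cmp C c a = cmp C (mu X) (TM c) \<longrightarrow>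
           is_EM_algebra C TO TM eta mu X a \<and> is_basis C TO TM eta mu X a c))
   \<and> bij_betw snd
       {(a, b). is_EM_algebra C TO TM eta mu X a \<and> is_basis C TO TM eta mu X a b}
       {c. is_equaliser C X (TO X) (TO (TO X)) c (TM c) (TM (eta X))}"
proof -
  interpret M C TO TM eta mu using assms(1,2) by unfold_locales
  have P1: "\<forall>a b. is_EM_algebra C TO TM eta mu X a \<and> is_basis C TO TM eta mu X a b \<longrightarrow>
        is_equaliser C X (TO X) (TO (TO X)) b (TM b) (TM (eta X))"
    using part1 assms(3) by blast
  have P2: "\<forall>c. is_equaliser C X (TO X) (TO (TO X)) c (TM c) (TM (eta X)) \<longrightarrow>
        (\<exists>!a. a \<in> Hom C (TO X) X \<and> cmp C c a = cmp C (mu X) (TM c)) \<and>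
        (\<forall>a. a \<in> Hom C (TO X) X \<and> cmp C c a = cmp C (mu X) (TM c) \<longrightarrow>
           is_EM_algebra C TO TM eta mu X a \<and> is_basis C TO TM eta mu X a c)"
    using part2 assms(3) by blast
  have inj: "inj_on snd {(a, b). is_EM_algebra C TO TM eta mu X a \<and> is_basis C TO TM eta mu X a b}"
    by (rule inj_onI) (auto dest: basis_unique)
  have img: "snd ` {(a, b). is_EM_algebra C TO TM eta mu X a \<and> is_basis C TO TM eta mu X a b}
       = {c. is_equaliser C X (TO X) (TO (TO X)) c (TM c) (TM (eta X))}"
  proof
    show "snd ` {(a, b). is_EM_algebra C TO TM eta mu X a \<and> is_basis C TO TM eta mu X a b}
       \<subseteq> {c. is_equaliser C X (TO X) (TO (TO X)) c (TM c) (TM (eta X))}"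
      using P1 by auto
  next
    show "{c. is_equaliser C X (TO X) (TO (TO X)) c (TM c) (TM (eta X))} \<subseteq>
       snd ` {(a, b). is_EM_algebra C TO TM eta mu X a \<and> is_basis C TO TM eta mu X a b}"
    proof
      fix c assume "c \<in> {c. is_equaliser C X (TO X) (TO (TO X)) c (TM c) (TM (eta X))}"
      then obtain a where "is_EM_algebra C TO TM eta mu X a \<and> is_basis C TO TM eta mu X a c"
        using P2 by blast
      thus "c \<in> snd ` {(a, b). is_EM_algebra C TO TM eta mu X a \<and> is_basis C TO TM eta mu X a b}"
        by (auto intro!: image_eqI[where x="(a, c)"])
    qed
  qed
  show ?thesis by (intro conjI P1 P2 bij_betw_imageI inj img)
qed

end
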